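(* Under the standing setting, if $f_0\in(0,\infty]$ and $f_\infty\in(0,\infty]$, then there exists $\underline\lambda>0$ such that problem (P$_\lambda$) has no positive solution for any $\lambda>\underline\lambda$.
   Context: Standing setting. $\varphi:\mathbb{R}\to\mathbb{R}$ is an odd, increasing homeomorphism satisfying condition (A): there exist increasing homeomorphisms $\psi_1,\psi_2:[0,\infty)\to[0,\infty)$ such that $\varphi(x)\psi_1(y)\le \varphi(xy)\le \varphi(x)\psi_2(y)$ for all $x,y\ge 0$. Let $c,d\in C([0,1],(0,\infty))$, and $\|\cdot\|_\infty$ the maximum norm on $C[0,1]$. Let $f\in C([0,\infty),[0,\infty))$ with $f(s)>0$ for $s>0$, and write $f_0=\lim_{s\to0^+}f(s)/\varphi(s)$, $f_\infty=\lim_{s\to\infty}f(s)/\varphi(s)$ (assumed to exist in $[0,\infty]$ whenever referred to). Let $h\in C((0,1),[0,\infty))$, $h\not\equiv 0$, with $\int_0^{1/2}\psi_1^{-1}\big(\int_s^{1/2}h(\tau)d\tau\big)ds+\int_{1/2}^1\psi_1^{-1}\big(\int_{1/2}^s h(\tau)d\tau\big)ds<\infty$. Notation attached to $h$: $\alpha_h=\sup\{x\in(0,1): h=0 \text{ on }(0,x)\}$ ($0$ if empty); $\beta_h=\inf\{x\in(0,1): h=0\text{ on }(x,1)\}$ ($1$ if empty); $\bar\alpha_h=\sup\{x\in(\alpha_h,1]: h>0 \text{ on }(\alpha_h,x)\}$; $\bar\beta_h=\inf\{x\in[0,\beta_h): h>0\text{ on }(x,\beta_h)\}$; $\gamma_h^1=(3\alpha_h+\bar\alpha_h)/4$,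 $\gamma_h^2=(\bar\beta_h+3\beta_h)/4$. It is assumed that $0\le\alpha_h<\gamma_h^1<\gamma_h^2<\beta_h\le 1$. For $\lambda\ge0$, problem (P$_\lambda$) is: $(d(t)\varphi(c(t)u'(t)))'+\lambda h(t)f(u(t))=0$ for $t\in(0,1)$, $u(0)=u(1)=0$. A solution is $u\in C[0,1]\cap C^1(0,1)$ such that $t\mapsto d(t)\varphi(c(t)u'(t))$ is continuously differentiable on $(0,1)$ and the equation and boundary conditions hold; it is positive if $u(t)>0$ for all $t\in(0,1)$. *)

theory Defs
  imports "HOL-Analysis.Analysis"
begin

definition inc_homeo_nonneg :: "(real \<Rightarrow> real) \<Rightarrow> bool" where
  "inc_homeo_nonneg \<psi> \<longleftrightarrow> strict_mono_on {0..} \<psi> \<and> continuous_on {0..} \<psi> \<and> \<psi> ` {0..} = {0..}"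

definition odd_inc_homeo :: "(real \<Rightarrow> real) \<Rightarrow> bool" where
  "odd_inc_homeo \<phi> \<longleftrightarrow> (\<forall>x. \<phi> (-x) = - \<phi> x) \<and> strict_mono \<phi> \<and> continuous_on UNIV \<phi> \<and> surj \<phi>"

definition condA :: "(real \<Rightarrow> real) \<Rightarrow> (real \<Rightarrow> real) \<Rightarrow> (real \<Rightarrow> real) \<Rightarrow> bool" where
  "condA \<phi> \<psi>1 \<psi>2 \<longleftrightarrow> inc_homeo_nonneg \<psi>1 \<and> inc_homeo_nonneg \<psi>2 \<and>
     (\<forall>x\<ge>0. \<forall>y\<ge>0. \<phi> x * \<psi>1 y \<le> \<phi> (x * y) \<and> \<phi> (x * y) \<le> \<phi> x * \<psi>2 y)"

definition h_integrability :: "(real \<Rightarrow> real) \<Rightarrow> (real \<Rightarrow> real) \<Rightarrow> bool" where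
  "h_integrability \<psi>1 h \<longleftrightarrow>
     (\<integral>\<^sup>+ s. indicator {0<..<1/2} s * ennreal (inv_into {0..} \<psi>1 (integral {s..1/2} h)) \<partial>lborel)
   + (\<integral>\<^sup>+ s. indicator {1/2<..<1} s * ennreal (inv_into {0..} \<psi>1 (integral {1/2..s} h)) \<partial>lborel)
   < \<infinity>"

definition alpha_h :: "(real \<Rightarrow> real) \<Rightarrow> real" where
  "alpha_h h = (let S = {x \<in> {0<..<1}. \<forall>t\<in>{0<..<x}. h t = 0} in if S = {} then 0 else Sup S)"

definition beta_h :: "(real \<Rightarrow> real) \<Rightarrow> real" where
  "beta_h h = (let S = {x \<in> {0<..<1}. \<forall>t\<in>{x<..<1}. h t = 0} in if S = {} then 1 else Inf S)"

text \<open>If the defining set is empty we take \<alpha>_h (resp. \<beta>_h), so that the standing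
  assumption \<alpha>_h < \<gamma>^1 (resp. \<gamma>^2 < \<beta>_h) fails in that degenerate case.\<close>
definition alpha_bar_h :: "(real \<Rightarrow> real) \<Rightarrow> real" where
  "alpha_bar_h h = (let a = alpha_h h; S = {x \<in> {a<..1}. \<forall>t\<in>{a<..<x}. h t > 0}
     in if S = {} then a else Sup S)"

definition beta_bar_h :: "(real \<Rightarrow> real) \<Rightarrow> real" where
  "beta_bar_h h = (let b = beta_h h; S = {x \<in> {0..<b}. \<forall>t\<in>{x<..<b}. h t > 0}
     in if S = {} then b else Inf S)"

definition gamma1_h :: "(real \<Rightarrow> real) \<Rightarrow> real" where
  "gamma1_h h = (3 * alpha_h h + alpha_bar_h h) / 4"

definition gamma2_h :: "(real \<Rightarrow> real) \<Rightarrow> real" where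
  "gamma2_h h = (beta_bar_h h + 3 * beta_h h) / 4"

definition is_solution ::
  "(real \<Rightarrow> real) \<Rightarrow> (real \<Rightarrow> real) \<Rightarrow> (real \<Rightarrow> real) \<Rightarrow> (real \<Rightarrow> real) \<Rightarrow> (real \<Rightarrow> real)
    \<Rightarrow> real \<Rightarrow> (real \<Rightarrow> real) \<Rightarrow> bool" where
  "is_solution \<phi> c d h f lam u \<longleftrightarrow>
     continuous_on {0..1} u \<and>
     (\<exists>u'. (\<forall>t\<in>{0<..<1}. (u has_real_derivative u' t) (at t)) \<and> continuous_on {0<..<1} u' \<and>
        (\<exists>w'. (\<forall>t\<in>{0<..<1}. ((\<lambda>s. d s * \<phi> (c s * u' s)) has_real_derivative w' t) (at t)) \<and>
              continuous_on {0<..<1} w' \<and>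
              (\<forall>t\<in>{0<..<1}. w' t + lam * h t * f (u t) = 0))) \<and>
     u 0 = 0 \<and> u 1 = 0"

definition is_positive_solution ::
  "(real \<Rightarrow> real) \<Rightarrow> (real \<Rightarrow> real) \<Rightarrow> (real \<Rightarrow> real) \<Rightarrow> (real \<Rightarrow> real) \<Rightarrow> (real \<Rightarrow> real)
    \<Rightarrow> real \<Rightarrow> (real \<Rightarrow> real) \<Rightarrow> bool" where
  "is_positive_solution \<phi> c d h f lam u \<longleftrightarrow>
     is_solution \<phi> c d h f lam u \<and> (\<forall>t\<in>{0<..<1}. u t > 0)"

end

theory Submission imports Defs begin

lemma phi_facts:
  assumes "odd_inc_homeo \<phi>"
  shows "\<phi> 0 = 0" "\<And>x y. \<phi> x \<le> \<phi> y \<longleftrightarrow> x \<le> y" "\<And>x. \<phi> x > 0 \<longleftrightarrow> x > 0"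
    "\<And>x. \<phi> (-x) = - \<phi> x" "continuous_on UNIV \<phi>"
proof -
  have sm: "strict_mono \<phi>" and od: "\<And>x. \<phi> (-x) = - \<phi> x" and ct: "continuous_on UNIV \<phi>"
    using assms by (auto simp: odd_inc_homeo_def)
  show z: "\<phi> 0 = 0" using od[of 0] by simp
  show le: "\<And>x y. \<phi> x \<le> \<phi> y \<longleftrightarrow> x \<le> y" using sm by (simp add: strict_mono_less_eq)
  show "\<And>x. \<phi> x > 0 \<longleftrightarrow> x > 0" using sm z by (metis strict_mono_less)
  show "\<And>x. \<phi> (-x) = - \<phi> x" by (rule od)
  show "continuous_on UNIV \<phi>" by (rule ct)
qed

lemma f_lower:
  fixes f \<phi> :: "real \<Rightarrow> real" and f0 finf :: ereal
  assumes phi: "odd_inc_homeo \<phi>"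
    and f: "continuous_on {0..} f" "\<forall>s>0. f s > 0"
    and f0: "((\<lambda>s. ereal (f s / \<phi> s)) \<longlongrightarrow> f0) (at_right 0)" "f0 > 0"
    and finf: "((\<lambda>s. ereal (f s / \<phi> s)) \<longlongrightarrow> finf) at_top" "finf > 0"
  shows "\<exists>m>0. \<forall>s>0. f s \<ge> m * \<phi> s"
proof -
  note pf = phi_facts[OF phi]
  obtain r1 where r1: "0 < ereal r1" "ereal r1 < f0" using ereal_dense2[OF f0(2)] by blast
  obtain r2 where r2: "0 < ereal r2" "ereal r2 < finf" using ereal_dense2[OF finf(2)] by blast
  have "eventually (\<lambda>s. ereal r1 < ereal (f s / \<phi> s)) (at_right 0)"
    using order_tendstoD(1)[OF f0(1) r1(2)] .
  then obtain b where b: "b > 0" "\<And>y. y > 0 \<Longrightarrow> y < b \<Longrightarrow> r1 < f y / \<phi> y"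
    unfolding eventually_at_right_field by auto
  have "eventually (\<lambda>s. ereal r2 < ereal (f s / \<phi> s)) at_top"
    using order_tendstoD(1)[OF finf(1) r2(2)] .
  then obtain N where N: "\<And>y. y \<ge> N \<Longrightarrow> r2 < f y / \<phi> y"
    unfolding eventually_at_top_linorder by auto
  define S where "S = {b/2..max N b}"
  have cs: "continuous_on S (\<lambda>s. f s / \<phi> s)"
  proof (rule continuous_on_divide)
    have "S \<subseteq> {0..}" using b(1) by (auto simp: S_def)
    then show "continuous_on S f" using f(1) continuous_on_subset by blast
    show "continuous_on S \<phi>" using pf(5) by (rule continuous_on_subset) auto
    show "\<forall>x\<in>S. \<phi> x \<noteq> 0"
    proof
      fix x assume "x \<in> S" then have "x > 0" using b(1) by (auto simp: S_def)
      then show "\<phi> x \<noteq> 0" using pf(3)[of x] by auto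
    qed
  qed
  have "S \<noteq> {}" using b by (auto simp: S_def)
  then obtain x0 where x0: "x0 \<in> S" "\<And>y. y \<in> S \<Longrightarrow> f x0 / \<phi> x0 \<le> f y / \<phi> y"
    using continuous_attains_inf[OF _ _ cs] by (auto simp: S_def)
  have x0p: "x0 > 0" using x0(1) b by (auto simp: S_def)
  define r3 where "r3 = f x0 / \<phi> x0"
  have r3: "r3 > 0" unfolding r3_def using x0p f(2) pf(3) by auto
  define m where "m = min r1 (min r2 r3)"
  have m: "m > 0" using r1 r2 r3 by (auto simp: m_def)
  have "f s \<ge> m * \<phi> s" if s: "s > 0" for s
  proof -
    have q: "m \<le> f s / \<phi> s"
    proof (cases "s < b/2")
      case True thus ?thesis using b(2)[OF s] b by (auto simp: m_def)
    next
      case F: False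
      show ?thesis
      proof (cases "s \<ge> N")
        case True thus ?thesis using N[of s] by (auto simp: m_def)
      next
        case False
        then have "s \<in> S" using F by (auto simp: S_def)
        thus ?thesis using x0(2)[of s] by (auto simp: m_def r3_def)
      qed
    qed
    have "\<phi> s > 0" using pf(3) s by auto
    thus ?thesis using q by (simp add: field_simps)
  qed
  thus ?thesis using m by blast
qed

theorem theorem3p7:
  fixes \<phi> \<psi>1 \<psi>2 c d f h :: "real \<Rightarrow> real" and f0 finf :: ereal
  assumes phi: "odd_inc_homeo \<phi>"
    and A: "condA \<phi> \<psi>1 \<psi>2"
    and c: "continuous_on {0..1} c" "\<forall>t\<in>{0..1}. c t > 0"
    and d: "continuous_on {0..1} d" "\<forall>t\<in>{0..1}. d t > 0"
    and f: "continuous_on {0..} f" "\<forall>s\<ge>0. f s \<ge> 0" "\<forall>s>0. f s > 0"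
    and h: "continuous_on {0<..<1} h" "\<forall>t\<in>{0<..<1}. h t \<ge> 0" "\<exists>t\<in>{0<..<1}. h t \<noteq> 0"
    and hint: "h_integrability \<psi>1 h"
    and hpos: "0 \<le> alpha_h h" "alpha_h h < gamma1_h h" "gamma1_h h < gamma2_h h"
              "gamma2_h h < beta_h h" "beta_h h \<le> 1"
    and f0: "((\<lambda>s. ereal (f s / \<phi> s)) \<longlongrightarrow> f0) (at_right 0)" "f0 > 0"
    and finf: "((\<lambda>s. ereal (f s / \<phi> s)) \<longlongrightarrow> finf) at_top" "finf > 0"
  shows "\<exists>lam0>0. \<forall>lam>lam0. \<not> (\<exists>u. is_positive_solution \<phi> c d h f lam u)"
proof -
  note pf = phi_facts[OF phi]
  have psi2: "\<And>x y. x \<ge> 0 \<Longrightarrow> y \<ge> 0 \<Longrightarrow> \<phi> (x * y) \<le> \<phi> x * \<psi>2 y"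
    using A by (auto simp: condA_def)
  obtain m0 where m0: "m0 > 0" "\<And>s. s > 0 \<Longrightarrow> f s \<ge> m0 * \<phi> s"
    using f_lower[OF phi f(1) f(3) f0 finf] by blast
  obtain t0 where t0: "t0 \<in> {0<..<1}" "h t0 > 0" using h(2,3) by force
  define h0 where "h0 = h t0 / 2"
  have h0: "h0 > 0" using t0 by (simp add: h0_def)
  obtain dl where dl: "dl > 0" "\<And>x. x \<in> {0<..<1} \<Longrightarrow> dist x t0 < dl \<Longrightarrow> dist (h x) (h t0) < h0"
    using h(1) t0(1) h0 unfolding continuous_on_iff by metis
  define r where "r = min (dl/2) (min (t0/2) ((1-t0)/2))"
  define a where "a = t0 - r"
  define b where "b = t0 + r"
  have r: "r > 0" using dl t0 by (auto simp: r_def)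
  have rle: "r \<le> t0/2" "r \<le> (1-t0)/2" "r \<le> dl/2" unfolding r_def by linarith+
  have ab: "0 < a" "a < t0" "t0 < b" "b < 1" using r t0 rle by (auto simp: a_def b_def)
  have hab: "h x > h0" if "a \<le> x" "x \<le> b" for x
  proof -
    have "x \<in> {0<..<1}" using that ab by auto
    moreover have "dist x t0 < dl" using that r dl rle by (auto simp: a_def b_def dist_real_def)
    ultimately have "dist (h x) (h t0) < h0" using dl by blast
    thus ?thesis unfolding dist_real_def h0_def by linarith
  qed
  obtain xc where xc: "xc \<in> {0..1}" "\<And>y. y \<in> {0..1} \<Longrightarrow> c y \<le> c xc"
    using continuous_attains_sup[OF compact_Icc _ c(1)] by auto
  obtain xd where xd: "xd \<in> {0..1}" "\<And>y. y \<in> {0..1} \<Longrightarrow> d y \<le> d xd"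
    using continuous_attains_sup[OF compact_Icc _ d(1)] by auto
  define C where "C = c xc"
  define D where "D = d xd"
  have C: "C > 0" "\<And>y. y \<in> {0..1} \<Longrightarrow> c y \<le> C" using xc c(2) by (auto simp: C_def)
  have D: "D > 0" "\<And>y. y \<in> {0..1} \<Longrightarrow> d y \<le> D" using xd d(2) by (auto simp: D_def)
  define K1 where "K1 = \<psi>2 (C / a)"
  define K2 where "K2 = \<psi>2 (C / (1 - b))"
  define lam0 where "lam0 = max 1 (max (D * K1 / (m0 * h0 * r)) (D * K2 / (m0 * h0 * r)))"
  have "\<forall>lam>lam0. \<not> (\<exists>u. is_positive_solution \<phi> c d h f lam u)"
  proof (intro allI impI notI)
    fix lam assume lam: "lam > lam0"
    assume "\<exists>u. is_positive_solution \<phi> c d h f lam u"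
    then obtain u u' w' where
      ucont: "continuous_on {0..1} u" and
      uder: "\<And>t. t\<in>{0<..<1} \<Longrightarrow> (u has_real_derivative u' t) (at t)" and
      wder: "\<And>t. t\<in>{0<..<1} \<Longrightarrow> ((\<lambda>s. d s * \<phi> (c s * u' s)) has_real_derivative w' t) (at t)" and
      eq: "\<And>t. t\<in>{0<..<1} \<Longrightarrow> w' t + lam * h t * f (u t) = 0" and
      u01: "u 0 = 0" "u 1 = 0" and upos: "\<And>t. t\<in>{0<..<1} \<Longrightarrow> u t > 0"
      unfolding is_positive_solution_def is_solution_def by blast
    define W where "W = (\<lambda>s. d s * \<phi> (c s * u' s))"
    have lampos: "lam > 0" using lam by (simp add: lam0_def)
    have w'le: "w' t \<le> 0" if "t \<in> {0<..<1}" for t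
    proof -
      have "h t * f (u t) \<ge> 0" using h(2) f(2) upos[OF that] that by auto
      then have "lam * h t * f (u t) \<ge> 0" using lampos by (simp add: mult.assoc)
      thus ?thesis using eq[OF that] by linarith
    qed
    have Wanti: "W y \<le> W x" if "0 < x" "x \<le> y" "y < 1" for x y
    proof (rule DERIV_nonpos_imp_nonincreasing[of x y W])
      show "x \<le> y" by fact
      fix t assume "x \<le> t" "t \<le> y"
      then have t: "t \<in> {0<..<1}" using that by auto
      show "\<exists>y. DERIV W t :> y \<and> y \<le> 0"
        using wder[OF t] w'le[OF t] unfolding W_def by blast
    qed
    obtain tau where tau: "tau \<in> {0..1}" "\<And>y. y \<in> {0..1} \<Longrightarrow> u y \<le> u tau"
      using continuous_attains_sup[OF compact_Icc _ ucont] by auto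
    have "u tau > 0" using tau(2)[of t0] upos[OF t0(1)] t0(1) by auto
    then have "tau \<noteq> 0" "tau \<noteq> 1" using u01 by auto
    then have tau01: "0 < tau" "tau < 1" using tau(1) by auto
    have "u' tau = 0"
    proof (rule DERIV_local_max[OF uder[of tau]])
      show "tau \<in> {0<..<1}" using tau01 by auto
      show "0 < min tau (1 - tau)" using tau01 by auto
      show "\<forall>y. \<bar>tau - y\<bar> < min tau (1 - tau) \<longrightarrow> u y \<le> u tau"
      proof (intro allI impI)
        fix y assume "\<bar>tau - y\<bar> < min tau (1 - tau)"
        then have "y \<in> {0..1}" by (auto simp: abs_less_iff)
        then show "u y \<le> u tau" by (rule tau(2))
      qed
    qed
    then have Wtau: "W tau = 0" using pf(1) by (simp add: W_def)
    have dpos: "\<And>t. t \<in> {0<..<1} \<Longrightarrow> d t > 0" and cpos: "\<And>t. t \<in> {0<..<1} \<Longrightarrow> c t > 0"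
      using d(2) c(2) by auto
    show False
    proof (cases "t0 \<le> tau")
      case True
      have u'nn: "u' t \<ge> 0" if "0 < t" "t \<le> tau" for t
      proof -
        have "W t \<ge> 0" using Wanti[of t tau] that tau01 Wtau by auto
        then have "\<phi> (c t * u' t) \<ge> 0" using dpos[of t] that tau01
          by (auto simp: W_def zero_le_mult_iff)
        then have "c t * u' t \<ge> 0" using pf(2)[of 0 "c t * u' t"] pf(1) by simp
        thus ?thesis using cpos[of t] that tau01 by (auto simp: zero_le_mult_iff)
      qed
      have "\<exists>l z. 0 < z \<and> z < a \<and> DERIV u z :> l \<and> u a - u 0 = (a - 0) * l"
      proof (rule MVT)
        show "0 < a" by (rule ab(1))
        show "continuous_on {0..a} u" using ucont continuous_on_subset[of "{0..1}" u "{0..a}"] ab by auto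
        fix x assume "0 < x" "x < a"
        then have "x \<in> {0<..<1}" using ab by auto
        then show "u differentiable (at x)" using uder unfolding real_differentiable_def by blast
      qed
      then obtain l z where z: "0 < z" "z < a" "DERIV u z :> l" "u a - u 0 = (a - 0) * l" by blast
      have z01: "z \<in> {0<..<1}" using z ab by auto
      have "l = u' z" using DERIV_unique[OF z(3) uder[OF z01]] .
      then have uz: "u' z = u a / a" using z(4) u01 ab by (simp add: field_simps)
      have a01: "a \<in> {0<..<1}" using ab by auto
      have uapos: "u a > 0" by (rule upos[OF a01])
      have Wa: "W a \<ge> 0" using Wanti[of a tau] ab True Wtau tau01 by auto
      have Wza: "W a \<le> W z" using Wanti[of z a] z ab by auto
      define p where "p = \<phi> (c z * u' z)"
      have Wz: "W z = d z * p" by (simp add: W_def p_def)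
      have dz: "d z > 0" "d z \<le> D" using dpos[OF z01] D(2)[of z] z01 by auto
      have czp: "c z > 0" "c z \<le> C" using cpos[OF z01] C(2)[of z] z01 by auto
      have p0: "p \<ge> 0" using Wz Wza Wa dz by (metis zero_le_mult_iff not_le order.trans less_imp_le)
      have uzn: "u' z \<ge> 0" using uz uapos ab by simp
      have "c z * u' z \<le> C * u' z" using czp uzn by (intro mult_right_mono) auto
      then have "c z * u' z \<le> C * (u a / a)" using uz by simp
      then have pC: "p \<le> \<phi> (C * (u a / a))" unfolding p_def using pf(2) by blast
      have "W a \<le> d z * p" using Wza Wz by simp
      also have "\<dots> \<le> D * p" using dz p0 by (simp add: mult_right_mono)
      also have "\<dots> \<le> D * \<phi> (C * (u a / a))" using pC D(1) by (simp add: mult_left_mono)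
      also have "\<phi> (C * (u a / a)) = \<phi> (u a * (C / a))" by (simp add: field_simps)
      also have "D * \<dots> \<le> D * (\<phi> (u a) * K1)"
        unfolding K1_def using psi2[of "u a" "C / a"] uapos C(1) ab D(1)
        by (intro mult_left_mono) auto
      finally have up: "W a \<le> D * (\<phi> (u a) * K1)" .
      have "\<exists>z2. a < z2 \<and> z2 < t0 \<and> W t0 - W a = (t0 - a) * w' z2"
      proof (rule MVT2)
        show "a < t0" by (rule ab(2))
        fix x assume "a \<le> x" "x \<le> t0"
        then have "x \<in> {0<..<1}" using ab by auto
        then show "DERIV W x :> w' x" using wder unfolding W_def by blast
      qed
      then obtain z2 where z2: "a < z2" "z2 < t0" "W t0 - W a = (t0 - a) * w' z2" by blast
      have z201: "z2 \<in> {0<..<1}" using z2 ab by auto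
      have Wt0: "W t0 \<ge> 0" using Wanti[of t0 tau] ab True Wtau tau01 by auto
      have ta: "t0 - a = r" by (simp add: a_def)
      have e: "w' z2 = - (lam * h z2 * f (u z2))" using eq[OF z201] by linarith
      have e2: "r * w' z2 = - (r * (lam * h z2 * f (u z2)))" unfolding e by simp
      have "W t0 - W a = r * w' z2" using z2(3) ta by simp
      then have lowW: "r * (lam * h z2 * f (u z2)) \<le> W a"
        using e2 Wt0 by linarith
      have "u a \<le> u z2"
      proof (rule DERIV_nonneg_imp_nondecreasing[of a z2 u])
        show "a \<le> z2" using z2 by simp
        fix x assume x: "a \<le> x" "x \<le> z2"
        then have "x \<in> {0<..<1}" using ab z2 by auto
        moreover have "u' x \<ge> 0" using u'nn[of x] x ab z2 True by auto
        ultimately show "\<exists>y. DERIV u x :> y \<and> y \<ge> 0" using uder by blast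
      qed
      then have "\<phi> (u a) \<le> \<phi> (u z2)" using pf(2) by blast
      moreover have "m0 * \<phi> (u z2) \<le> f (u z2)" using m0(2) upos[OF z201] by blast
      ultimately have fz: "m0 * \<phi> (u a) \<le> f (u z2)" using m0(1) by (meson mult_left_mono less_imp_le order.trans)
      have Pp: "\<phi> (u a) > 0" using pf(3) uapos by blast
      have hz: "h0 \<le> h z2" using hab[of z2] z2 ab by auto
      have "h0 * (m0 * \<phi> (u a)) \<le> h z2 * f (u z2)"
        using hz fz h0 m0(1) Pp by (intro mult_mono) auto
      then have "r * lam * (h0 * (m0 * \<phi> (u a))) \<le> r * lam * (h z2 * f (u z2))"
        using r lampos by (intro mult_left_mono) auto
      then have "r * lam * (h0 * (m0 * \<phi> (u a))) \<le> D * (\<phi> (u a) * K1)"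
        using lowW up by (simp add: algebra_simps)
      then have "(lam * (m0 * h0 * r)) * \<phi> (u a) \<le> (D * K1) * \<phi> (u a)"
        by (simp add: algebra_simps)
      then have "lam * (m0 * h0 * r) \<le> D * K1" using Pp by simp
      then have "lam \<le> D * K1 / (m0 * h0 * r)" using m0(1) h0 r by (simp add: pos_le_divide_eq)
      moreover have "D * K1 / (m0 * h0 * r) \<le> lam0" by (simp add: lam0_def)
      ultimately show False using lam by simp
    next
      case False
      have u'np: "u' t \<le> 0" if "tau \<le> t" "t < 1" for t
      proof -
        have "W t \<le> 0" using Wanti[of tau t] that tau01 Wtau by auto
        then have "\<phi> (c t * u' t) \<le> 0" using dpos[of t] that tau01
          by (auto simp: W_def mult_le_0_iff)
        then have "c t * u' t \<le> 0" using pf(2)[of "c t * u' t" 0] pf(1) by simp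
        thus ?thesis using cpos[of t] that tau01 by (auto simp: mult_le_0_iff)
      qed
      have "\<exists>l z. b < z \<and> z < 1 \<and> DERIV u z :> l \<and> u 1 - u b = (1 - b) * l"
      proof (rule MVT)
        show "b < 1" by (rule ab(4))
        show "continuous_on {b..1} u" using ucont continuous_on_subset[of "{0..1}" u "{b..1}"] ab by auto
        fix x assume "b < x" "x < 1"
        then have "x \<in> {0<..<1}" using ab by auto
        then show "u differentiable (at x)" using uder unfolding real_differentiable_def by blast
      qed
      then obtain l z where z: "b < z" "z < 1" "DERIV u z :> l" "u 1 - u b = (1 - b) * l" by blast
      have z01: "z \<in> {0<..<1}" using z ab by auto
      have "l = u' z" using DERIV_unique[OF z(3) uder[OF z01]] .
      then have uz: "- u' z = u b / (1 - b)" using z(4) u01 ab by (simp add: field_simps)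
      have b01: "b \<in> {0<..<1}" using ab by auto
      have ubpos: "u b > 0" by (rule upos[OF b01])
      have Wb: "W b \<le> 0" using Wanti[of tau b] ab False Wtau tau01 by auto
      have Wzb: "W z \<le> W b" using Wanti[of b z] z ab by auto
      define p where "p = \<phi> (c z * u' z)"
      have Wz: "W z = d z * p" by (simp add: W_def p_def)
      have dz: "d z > 0" "d z \<le> D" using dpos[OF z01] D(2)[of z] z01 by auto
      have czp: "c z > 0" "c z \<le> C" using cpos[OF z01] C(2)[of z] z01 by auto
      have p0: "- p \<ge> 0"
      proof -
        have "d z * p \<le> 0" using Wz Wzb Wb by simp
        then show ?thesis using dz by (simp add: mult_le_0_iff)
      qed
      have uzn: "- u' z \<ge> 0" using uz ubpos ab by simp
      have "c z * (- u' z) \<le> C * (- u' z)" using czp uzn by (intro mult_right_mono) auto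
      moreover have "- (c z * u' z) = c z * (- u' z)" by simp
      ultimately have "- (c z * u' z) \<le> C * (u b / (1 - b))" using uz by metis
      then have "\<phi> (- (c z * u' z)) \<le> \<phi> (C * (u b / (1 - b)))" using pf(2) by blast
      then have pC: "- p \<le> \<phi> (C * (u b / (1 - b)))" unfolding p_def pf(4) .
      have "- W b \<le> d z * (- p)" using Wzb Wz by simp
      also have "\<dots> \<le> D * (- p)" using dz p0 by (intro mult_right_mono) auto
      also have "\<dots> \<le> D * \<phi> (C * (u b / (1 - b)))" using pC D(1) by (intro mult_left_mono) auto
      also have "\<phi> (C * (u b / (1 - b))) = \<phi> (u b * (C / (1 - b)))" by (simp add: field_simps)
      also have "D * \<dots> \<le> D * (\<phi> (u b) * K2)"
        unfolding K2_def using psi2[of "u b" "C / (1 - b)"] ubpos C(1) ab D(1)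
        by (intro mult_left_mono) auto
      finally have up: "- W b \<le> D * (\<phi> (u b) * K2)" .
      have "\<exists>z2. t0 < z2 \<and> z2 < b \<and> W b - W t0 = (b - t0) * w' z2"
      proof (rule MVT2)
        show "t0 < b" by (rule ab(3))
        fix x assume "t0 \<le> x" "x \<le> b"
        then have "x \<in> {0<..<1}" using ab by auto
        then show "DERIV W x :> w' x" using wder unfolding W_def by blast
      qed
      then obtain z2 where z2: "t0 < z2" "z2 < b" "W b - W t0 = (b - t0) * w' z2" by blast
      have z201: "z2 \<in> {0<..<1}" using z2 ab by auto
      have Wt0: "W t0 \<le> 0" using Wanti[of tau t0] ab False Wtau tau01 by auto
      have ta: "b - t0 = r" by (simp add: b_def)
      have e: "w' z2 = - (lam * h z2 * f (u z2))" using eq[OF z201] by linarith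
      have e2: "r * w' z2 = - (r * (lam * h z2 * f (u z2)))" unfolding e by simp
      have "W b - W t0 = r * w' z2" using z2(3) ta by simp
      then have lowW: "r * (lam * h z2 * f (u z2)) \<le> - W b"
        using e2 Wt0 by linarith
      have "u b \<le> u z2"
      proof (rule DERIV_nonpos_imp_nonincreasing[of z2 b u])
        show "z2 \<le> b" using z2 by simp
        fix x assume x: "z2 \<le> x" "x \<le> b"
        then have "x \<in> {0<..<1}" using ab z2 by auto
        moreover have "u' x \<le> 0" using u'np[of x] x ab z2 False by auto
        ultimately show "\<exists>y. DERIV u x :> y \<and> y \<le> 0" using uder by blast
      qed
      then have "\<phi> (u b) \<le> \<phi> (u z2)" using pf(2) by blast
      moreover have "m0 * \<phi> (u z2) \<le> f (u z2)" using m0(2) upos[OF z201] by blast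
      ultimately have fz: "m0 * \<phi> (u b) \<le> f (u z2)" using m0(1) by (meson mult_left_mono less_imp_le order.trans)
      have Pp: "\<phi> (u b) > 0" using pf(3) ubpos by blast
      have hz: "h0 \<le> h z2" using hab[of z2] z2 ab by auto
      have "h0 * (m0 * \<phi> (u b)) \<le> h z2 * f (u z2)"
        using hz fz h0 m0(1) Pp by (intro mult_mono) auto
      then have "r * lam * (h0 * (m0 * \<phi> (u b))) \<le> r * lam * (h z2 * f (u z2))"
        using r lampos by (intro mult_left_mono) auto
      then have "r * lam * (h0 * (m0 * \<phi> (u b))) \<le> D * (\<phi> (u b) * K2)"
        using lowW up by (simp add: algebra_simps)
      then have "(lam * (m0 * h0 * r)) * \<phi> (u b) \<le> (D * K2) * \<phi> (u b)"
        by (simp add: algebra_simps)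
      then have "lam * (m0 * h0 * r) \<le> D * K2" using Pp by simp
      then have "lam \<le> D * K2 / (m0 * h0 * r)" using m0(1) h0 r by (simp add: pos_le_divide_eq)
      moreover have "D * K2 / (m0 * h0 * r) \<le> lam0" by (simp add: lam0_def)
      ultimately show False using lam by simp
    qed
  qed
  moreover have "lam0 > 0" by (simp add: lam0_def)
  ultimately show ?thesis by blast
qed
end
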